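(* Let $\mathcal{M}=(V,\{A_i\}_{i\in V},P)$ be a finite Markov decision process with state set $V=\{1,\dots,n\}$, nonempty finite action sets $A_i$, and transition probabilities $P(i,a,j)\ge 0$ with $\sum_{j=1}^n P(i,a,j)=1$ for all $i\in V$, $a\in A_i$. Let $R\subseteq V$ and $S\subseteq V\setminus R$, and let $\rho>n$. Consider the linear programs $$\text{(LP1)}\quad \min_{\mathbf{x}\in\mathbb{R}^n}\ \mathbf{1}^T\mathbf{x}\ \text{ s.t. } \mathbf{x}\in[0,1]^n,\ x_i=1\ \forall i\in S,\ x_i=0\ \forall i\in R,\ x_i\ge \sum_{j=1}^n P(i,a,j)x_j\ \forall i\in V\setminus R,\ a\in A_i,$$ $$\text{(LP2)}\quad \min_{\mathbf{x}\in\mathbb{R}^n}\ \mathbf{1}^T\mathbf{x}+\rho\sum_{i\in S}(1-x_i)\ \text{ s.t. } \mathbf{x}\in[0,1]^n,\ x_i=0\ \forall i\in R,\ x_i\ge \sum_{j=1}^n P(i,a,j)x_j\ \forall i\in V\setminus R,\ a\in A_i.$$ Then (LP1) and (LP2) have the same optimal value and the same set of optimal solutions.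
   Context: Here $\mathbf{1}$ denotes the all-ones vector in $\mathbb{R}^n$. *)

theory Defs
  imports Main "HOL-Analysis.Analysis"
begin

text \<open>States are the elements of a finite type 'n (so n = CARD('n));
  actions of state i are A i; P i a j is the transition probability.
  Vectors x in R^n are functions 'n \<Rightarrow> real.\<close>

definition lp1_feasible ::
  "('n::finite \<Rightarrow> 'a set) \<Rightarrow> ('n \<Rightarrow> 'a \<Rightarrow> 'n \<Rightarrow> real) \<Rightarrow> 'n set \<Rightarrow> 'n set \<Rightarrow> ('n \<Rightarrow> real) set" where
  "lp1_feasible A P R S = {x. (\<forall>i. 0 \<le> x i \<and> x i \<le> 1) \<and> (\<forall>i\<in>S. x i = 1) \<and> (\<forall>i\<in>R. x i = 0)
     \<and> (\<forall>i. i \<notin> R \<longrightarrow> (\<forall>a\<in>A i. x i \<ge> (\<Sum>j\<in>UNIV. P i a j * x j)))}"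

definition lp2_feasible ::
  "('n::finite \<Rightarrow> 'a set) \<Rightarrow> ('n \<Rightarrow> 'a \<Rightarrow> 'n \<Rightarrow> real) \<Rightarrow> 'n set \<Rightarrow> ('n \<Rightarrow> real) set" where
  "lp2_feasible A P R = {x. (\<forall>i. 0 \<le> x i \<and> x i \<le> 1) \<and> (\<forall>i\<in>R. x i = 0)
     \<and> (\<forall>i. i \<notin> R \<longrightarrow> (\<forall>a\<in>A i. x i \<ge> (\<Sum>j\<in>UNIV. P i a j * x j)))}"

definition lp1_obj :: "('n::finite \<Rightarrow> real) \<Rightarrow> real" where
  "lp1_obj x = (\<Sum>i\<in>UNIV. x i)"

definition lp2_obj :: "real \<Rightarrow> 'n set \<Rightarrow> ('n::finite \<Rightarrow> real) \<Rightarrow> real" where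
  "lp2_obj \<rho> S x = (\<Sum>i\<in>UNIV. x i) + \<rho> * (\<Sum>i\<in>S. 1 - x i)"

definition opt_value :: "('b \<Rightarrow> real) \<Rightarrow> 'b set \<Rightarrow> real" where
  "opt_value f F = (INF x\<in>F. f x)"

definition opt_solutions :: "('b \<Rightarrow> real) \<Rightarrow> 'b set \<Rightarrow> 'b set" where
  "opt_solutions f F = {x \<in> F. \<forall>y\<in>F. f x \<le> f y}"

end

theory Submission
  imports Defs
begin

lemma F1_sub:
  assumes "x \<in> lp1_feasible A P R S"
  shows "x \<in> lp2_feasible A P R \<and> lp2_obj \<rho> S x = lp1_obj x"
  using assms by (simp add: lp1_feasible_def lp2_feasible_def lp2_obj_def lp1_obj_def)

lemma key:
  fixes A :: "'n::finite \<Rightarrow> 'a set" and P :: "'n \<Rightarrow> 'a \<Rightarrow> 'n \<Rightarrow> real"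
  assumes P0: "\<And>i a j. a \<in> A i \<Longrightarrow> P i a j \<ge> 0"
    and P1: "\<And>i a. a \<in> A i \<Longrightarrow> (\<Sum>j\<in>UNIV. P i a j) = 1"
    and SR: "S \<subseteq> UNIV - R"
    and rho: "\<rho> > real CARD('n)"
    and x: "x \<in> lp2_feasible A P R"
  shows "\<exists>y\<in>lp1_feasible A P R S. lp1_obj y \<le> lp2_obj \<rho> S x
            \<and> (x \<notin> lp1_feasible A P R S \<longrightarrow> lp1_obj y < lp2_obj \<rho> S x)"
proof -
  have xb: "\<And>i. 0 \<le> x i \<and> x i \<le> 1" and xR: "\<And>i. i \<in> R \<Longrightarrow> x i = 0"
    and xc: "\<And>i a. i \<notin> R \<Longrightarrow> a \<in> A i \<Longrightarrow> x i \<ge> (\<Sum>j\<in>UNIV. P i a j * x j)"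
    using x by (auto simp: lp2_feasible_def)
  define D where "D = (\<Sum>i\<in>S. 1 - x i)"
  have D0: "D \<ge> 0" unfolding D_def using xb by (intro sum_nonneg) auto
  have DS: "1 - x i \<le> D" if "i \<in> S" for i
    unfolding D_def using that xb by (intro member_le_sum) auto
  define y where "y = (\<lambda>i. min (x i + D) (if i \<in> R then 0 else 1))"
  have yle: "y i \<le> x i + D" for i unfolding y_def by simp
  have yle1: "y i \<le> 1" for i unfolding y_def by (simp add: min_le_iff_disj)
  have yge: "0 \<le> y i" for i unfolding y_def using xb[of i] D0 by simp
  have yS: "y i = 1" if "i \<in> S" for i using that SR DS[OF that] unfolding y_def by auto
  have yR: "y i = 0" if "i \<in> R" for i using that xb[of i] D0 unfolding y_def by auto
  have yc: "y i \<ge> (\<Sum>j\<in>UNIV. P i a j * y j)" if "i \<notin> R" "a \<in> A i" for i a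
  proof -
    have "(\<Sum>j\<in>UNIV. P i a j * y j) \<le> (\<Sum>j\<in>UNIV. P i a j * (x j + D))"
      by (intro sum_mono mult_left_mono yle P0 that)
    also have "\<dots> = (\<Sum>j\<in>UNIV. P i a j * x j) + D * (\<Sum>j\<in>UNIV. P i a j)"
      by (simp add: algebra_simps sum.distrib sum_distrib_left)
    also have "\<dots> \<le> x i + D" using xc[OF that] P1[OF that(2)] by simp
    finally have 1: "(\<Sum>j\<in>UNIV. P i a j * y j) \<le> x i + D" .
    have "(\<Sum>j\<in>UNIV. P i a j * y j) \<le> (\<Sum>j\<in>UNIV. P i a j * 1)"
      by (intro sum_mono mult_left_mono yle1 P0 that)
    then have 2: "(\<Sum>j\<in>UNIV. P i a j * y j) \<le> 1" using P1[OF that(2)] by simp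
    show ?thesis using 1 2 that unfolding y_def by simp
  qed
  have yF: "y \<in> lp1_feasible A P R S"
    unfolding lp1_feasible_def using yge yle1 yS yR yc by auto
  have "lp1_obj y \<le> (\<Sum>i\<in>UNIV. x i + D)" unfolding lp1_obj_def by (intro sum_mono yle)
  also have "\<dots> = (\<Sum>i\<in>UNIV. x i) + real CARD('n) * D" by (simp add: sum.distrib)
  finally have o1: "lp1_obj y \<le> (\<Sum>i\<in>UNIV. x i) + real CARD('n) * D" .
  have o2: "lp2_obj \<rho> S x = (\<Sum>i\<in>UNIV. x i) + \<rho> * D" unfolding lp2_obj_def D_def by simp
  have m1: "real CARD('n) * D \<le> \<rho> * D" using rho D0 by (intro mult_right_mono) auto
  have strict: "lp1_obj y < lp2_obj \<rho> S x" if "x \<notin> lp1_feasible A P R S"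
  proof -
    from that x obtain i where "i \<in> S" "x i \<noteq> 1" by (auto simp: lp1_feasible_def lp2_feasible_def)
    with xb[of i] DS[of i] have "D > 0" by fastforce
    then have "real CARD('n) * D < \<rho> * D" using rho by simp
    then show ?thesis using o1 o2 by linarith
  qed
  show ?thesis using yF o1 o2 m1 strict by force
qed

theorem lemma3:
  fixes A :: "'n::finite \<Rightarrow> 'a set"
    and P :: "'n \<Rightarrow> 'a \<Rightarrow> 'n \<Rightarrow> real"
    and R S :: "'n set"
    and \<rho> :: real
  assumes "\<And>i. finite (A i)"
    and "\<And>i. A i \<noteq> {}"
    and "\<And>i a j. a \<in> A i \<Longrightarrow> P i a j \<ge> 0"
    and "\<And>i a. a \<in> A i \<Longrightarrow> (\<Sum>j\<in>UNIV. P i a j) = 1"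
    and "S \<subseteq> UNIV - R"
    and "\<rho> > real CARD('n)"
  shows "opt_value lp1_obj (lp1_feasible A P R S) = opt_value (lp2_obj \<rho> S) (lp2_feasible A P R)
       \<and> opt_solutions lp1_obj (lp1_feasible A P R S) = opt_solutions (lp2_obj \<rho> S) (lp2_feasible A P R)"
proof -
  let ?F1 = "lp1_feasible A P R S" and ?F2 = "lp2_feasible A P R"
  let ?f1 = "lp1_obj" and ?f2 = "lp2_obj \<rho> S"
  have K: "\<exists>y\<in>?F1. ?f1 y \<le> ?f2 x \<and> (x \<notin> ?F1 \<longrightarrow> ?f1 y < ?f2 x)" if "x \<in> ?F2" for x
    using key[OF assms(3,4,5,6) that] .
  have E: "x \<in> ?F2 \<and> ?f2 x = ?f1 x" if "x \<in> ?F1" for x using F1_sub[OF that] .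
  define z :: "'n \<Rightarrow> real" where "z = (\<lambda>i. if i \<in> R then 0 else 1)"
  have "z \<in> ?F1"
  proof -
    have "(\<Sum>j\<in>UNIV. P i a j * z j) \<le> 1" if "a \<in> A i" for i a
    proof -
      have "(\<Sum>j\<in>UNIV. P i a j * z j) \<le> (\<Sum>j\<in>UNIV. P i a j * 1)"
        by (intro sum_mono mult_left_mono assms(3) that) (simp add: z_def)
      then show ?thesis using assms(4)[OF that] by simp
    qed
    then show ?thesis using assms(5) unfolding lp1_feasible_def z_def by auto
  qed
  then have ne1: "?F1 \<noteq> {}" by blast
  have ne2: "?F2 \<noteq> {}" using E \<open>z \<in> ?F1\<close> by blast
  have b1: "bdd_below (?f1 ` ?F1)"
    by (rule bdd_belowI[of _ 0]) (auto simp: lp1_obj_def lp1_feasible_def intro: sum_nonneg)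
  have nn2: "0 \<le> ?f2 x" if "x \<in> ?F2" for x
  proof -
    have "0 \<le> (\<Sum>i\<in>S. 1 - x i)" using that by (intro sum_nonneg) (auto simp: lp2_feasible_def)
    moreover have "0 \<le> (\<Sum>i\<in>UNIV. x i)" using that by (intro sum_nonneg) (auto simp: lp2_feasible_def)
    ultimately show ?thesis unfolding lp2_obj_def using assms(6)
      by (smt (verit) mult_nonneg_nonneg of_nat_0_le_iff)
  qed
  have b2: "bdd_below (?f2 ` ?F2)" by (rule bdd_belowI[of _ 0]) (auto intro: nn2)
  have v1: "(INF x\<in>?F1. ?f1 x) \<le> (INF x\<in>?F2. ?f2 x)"
  proof (rule cINF_greatest[OF ne2])
    fix x assume "x \<in> ?F2"
    then obtain y where "y \<in> ?F1" "?f1 y \<le> ?f2 x" using K by blast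
    then show "(INF x\<in>?F1. ?f1 x) \<le> ?f2 x" using cINF_lower[OF b1] by (meson order_trans)
  qed
  have v2: "(INF x\<in>?F2. ?f2 x) \<le> (INF x\<in>?F1. ?f1 x)"
  proof (rule cINF_greatest[OF ne1])
    fix x assume "x \<in> ?F1"
    then show "(INF x\<in>?F2. ?f2 x) \<le> ?f1 x" using E cINF_lower[OF b2] by metis
  qed
  have s1: "opt_solutions ?f1 ?F1 \<subseteq> opt_solutions ?f2 ?F2"
  proof
    fix x assume "x \<in> opt_solutions ?f1 ?F1"
    then have x: "x \<in> ?F1" "\<forall>y\<in>?F1. ?f1 x \<le> ?f1 y" by (auto simp: opt_solutions_def)
    have "?f2 x \<le> ?f2 w" if "w \<in> ?F2" for w
      using K[OF that] x E[OF x(1)] by force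
    then show "x \<in> opt_solutions ?f2 ?F2" using E[OF x(1)] by (auto simp: opt_solutions_def)
  qed
  have s2: "opt_solutions ?f2 ?F2 \<subseteq> opt_solutions ?f1 ?F1"
  proof
    fix x assume "x \<in> opt_solutions ?f2 ?F2"
    then have x: "x \<in> ?F2" "\<forall>y\<in>?F2. ?f2 x \<le> ?f2 y" by (auto simp: opt_solutions_def)
    have x1: "x \<in> ?F1"
    proof (rule ccontr)
      assume "x \<notin> ?F1"
      then obtain y where "y \<in> ?F1" "?f1 y < ?f2 x" using K[OF x(1)] by blast
      then show False using x(2) E by fastforce
    qed
    have "?f1 x \<le> ?f1 w" if "w \<in> ?F1" for w using x E[OF x1] E[OF that] by force
    then show "x \<in> opt_solutions ?f1 ?F1" using x1 by (auto simp: opt_solutions_def)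
  qed
  show ?thesis using v1 v2 s1 s2 unfolding opt_value_def by auto
qed

end
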